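(* Let $z\in\mathbb{D}^*$ and suppose that there are points $p\in f\Lambda_z$ and $q\in g\Lambda_z$ with $|p-q|=\delta$. Then the closed $\delta/2$-neighbourhood $\{x\in\mathbb{C}:d(x,\Lambda_z)\le\delta/2\}$ of $\Lambda_z$ is path connected.
   Context: For $z\in\mathbb{D}^*=\{0<|z|<1\}$, $f(x)=zx$, $g(x)=z(x-1)+1$, $\Lambda_z$ is the unique nonempty compact subset of $\mathbb{C}$ with $\Lambda_z=f(\Lambda_z)\cup g(\Lambda_z)$, and $f\Lambda_z=f(\Lambda_z)$, $g\Lambda_z=g(\Lambda_z)$. *)

theory Defs
  imports "HOL-Analysis.Analysis"
begin

definition ifs_f :: "complex \<Rightarrow> complex \<Rightarrow> complex" where
  "ifs_f z x = z * x"

definition ifs_g :: "complex \<Rightarrow> complex \<Rightarrow> complex" where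
  "ifs_g z x = z * (x - 1) + 1"

definition Lambda :: "complex \<Rightarrow> complex set" where
  "Lambda z = (THE K. K \<noteq> {} \<and> compact K \<and> K = ifs_f z ` K \<union> ifs_g z ` K)"

end

theory Submission
  imports Defs
begin


lemma inv_sub:
  fixes z :: complex
  assumes z1: "norm z < 1"
    and A: "A \<noteq> {}" "compact A" "A = ifs_f z ` A \<union> ifs_g z ` A"
    and B: "B \<noteq> {}" "compact B" "B = ifs_f z ` B \<union> ifs_g z ` B"
  shows "A \<subseteq> B"
proof -
  have cB: "closed B" using B compact_imp_closed by blast
  have "continuous_on A (\<lambda>x. infdist x B)" by (intro continuous_intros)
  then obtain x0 where x0: "x0 \<in> A" "\<And>y. y \<in> A \<Longrightarrow> infdist y B \<le> infdist x0 B"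
    using continuous_attains_sup[OF A(2) A(1)] by blast
  have key: "infdist x0 B \<le> norm z * infdist x0 B"
  proof -
    from x0(1) A(3) obtain y where y: "y \<in> A" "x0 = ifs_f z y \<or> x0 = ifs_g z y" by blast
    obtain w where w: "w \<in> B" "infdist y B = dist y w" using infdist_attains_inf[OF cB B(1)] by blast
    have fw: "ifs_f z w \<in> B" "ifs_g z w \<in> B" using w(1) B(3) by blast+
    have "infdist x0 B \<le> norm z * dist y w"
    proof (cases "x0 = ifs_f z y")
      case True
      have "infdist x0 B \<le> dist x0 (ifs_f z w)" by (rule infdist_le[OF fw(1)])
      also have "\<dots> = norm z * dist y w" using True
        by (simp add: ifs_f_def dist_norm norm_mult[symmetric] right_diff_distrib)
      finally show ?thesis .
    next
      case False
      then have e: "x0 = ifs_g z y" using y by blast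
      have "infdist x0 B \<le> dist x0 (ifs_g z w)" by (rule infdist_le[OF fw(2)])
      also have "\<dots> = norm z * dist y w" using e
        by (simp add: ifs_g_def dist_norm norm_mult[symmetric] right_diff_distrib)
      finally show ?thesis .
    qed
    also have "\<dots> = norm z * infdist y B" using w by simp
    also have "\<dots> \<le> norm z * infdist x0 B" using x0(2)[OF y(1)] by (simp add: mult_left_mono)
    finally show ?thesis .
  qed
  have "infdist x0 B = 0"
  proof -
    have "(1 - norm z) * infdist x0 B \<le> 0" using key by (simp add: algebra_simps)
    moreover have "1 - norm z > 0" using z1 by simp
    ultimately have "infdist x0 B \<le> 0" by (simp add: mult_le_0_iff)
    then show ?thesis using infdist_nonneg[of x0 B] by linarith
  qed
  then have "\<And>y. y \<in> A \<Longrightarrow> infdist y B = 0" using x0(2) infdist_nonneg by (metis order_antisym)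
  then show ?thesis using in_closed_iff_infdist_zero[OF cB B(1)] by blast
qed

definition Tset :: "complex \<Rightarrow> complex set \<Rightarrow> complex set" where
  "Tset z S = ifs_f z ` S \<union> ifs_g z ` S"

lemma attr_exists:
  fixes z :: complex
  assumes z0: "z \<noteq> 0" and z1: "norm z < 1"
  shows "\<exists>K. K \<noteq> {} \<and> compact K \<and> K = ifs_f z ` K \<union> ifs_g z ` K"
proof -
  define R where "R = 2 / (1 - norm z)"
  have R: "R * (1 - norm z) = 2" "R \<ge> 0" using z1 by (auto simp: R_def field_simps)
  define Bs where "Bs n = (Tset z ^^ n) (cball 0 R)" for n
  have mono: "S \<subseteq> S' \<Longrightarrow> Tset z S \<subseteq> Tset z S'" for S S' unfolding Tset_def by blast
  have base: "Tset z (cball 0 R) \<subseteq> cball 0 R"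
  proof
    fix x assume "x \<in> Tset z (cball 0 R)"
    then obtain y where y: "norm y \<le> R" "x = z * y \<or> x = z * (y - 1) + 1"
      unfolding Tset_def ifs_f_def ifs_g_def by auto
    have "norm (z * y) \<le> norm z * R" using y(1) by (simp add: norm_mult mult_left_mono)
    also have "\<dots> \<le> R" using z1 R(2) by (simp add: mult_left_le_one_le)
    finally have a: "norm (z*y) \<le> R" .
    have "norm (z * (y - 1) + 1) \<le> norm z * (R + 1) + 1"
    proof -
      have "norm (z * (y - 1) + 1) \<le> norm (z * (y-1)) + 1" using norm_triangle_ineq[of "z*(y-1)" 1] by simp
      also have "norm (z*(y-1)) \<le> norm z * (R+1)"
        using norm_triangle_ineq4[of y 1] y(1) by (simp add: norm_mult mult_left_mono)
      finally show ?thesis by simp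
    qed
    also have "\<dots> \<le> R" using R z1 by (simp add: algebra_simps)
    finally show "x \<in> cball 0 R" using y a by auto
  qed
  have dec: "Bs (Suc n) \<subseteq> Bs n" for n
    by (induction n) (auto simp: Bs_def base intro: mono[THEN subsetD])
  have decm: "m \<le> n \<Longrightarrow> Bs n \<subseteq> Bs m" for m n
    by (induction n rule: dec_induct) (use dec in blast)+
  have cpt: "compact (Bs n)" for n
  proof (induction n)
    case 0 then show ?case by (simp add: Bs_def)
  next
    case (Suc n)
    have "Bs (Suc n) = ifs_f z ` Bs n \<union> ifs_g z ` Bs n" by (simp add: Bs_def Tset_def)
    moreover have "continuous_on UNIV (ifs_f z)" "continuous_on UNIV (ifs_g z)"
      unfolding ifs_f_def ifs_g_def by (intro continuous_intros)+
    ultimately show ?case using Suc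
      by (metis compact_Un compact_continuous_image continuous_on_subset top_greatest)
  qed
  have zero: "0 \<in> Bs n" for n
  proof (induction n)
    case 0 then show ?case using R by (simp add: Bs_def)
  next
    case (Suc n) then show ?case by (force simp: Bs_def Tset_def ifs_f_def)
  qed
  define K where "K = (\<Inter>n. Bs n)"
  have "K \<noteq> {}" using zero K_def by blast
  moreover have "compact K"
  proof -
    have "closed K" unfolding K_def using cpt by (intro closed_INT) (simp add: compact_imp_closed)
    moreover have "K \<subseteq> Bs 0" unfolding K_def by blast
    ultimately show ?thesis using cpt[of 0] by (metis compact_Int_closed inf.absorb_iff2)
  qed
  moreover have "K = ifs_f z ` K \<union> ifs_g z ` K"
  proof -
    have injf: "inj (ifs_f z)" using z0 by (auto simp: inj_def ifs_f_def)
    have injg: "inj (ifs_g z)" using z0 by (auto simp: inj_def ifs_g_def)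
    have f: "ifs_f z ` K = (\<Inter>n. ifs_f z ` Bs n)" unfolding K_def
      by (rule image_INT[OF injf]) auto
    have g: "ifs_g z ` K = (\<Inter>n. ifs_g z ` Bs n)" unfolding K_def
      by (rule image_INT[OF injg]) auto
    have "(\<Inter>n. ifs_f z ` Bs n) \<union> (\<Inter>n. ifs_g z ` Bs n) = (\<Inter>n. ifs_f z ` Bs n \<union> ifs_g z ` Bs n)"
    proof
      show "(\<Inter>n. ifs_f z ` Bs n \<union> ifs_g z ` Bs n) \<subseteq> (\<Inter>n. ifs_f z ` Bs n) \<union> (\<Inter>n. ifs_g z ` Bs n)"
      proof
        fix x assume x: "x \<in> (\<Inter>n. ifs_f z ` Bs n \<union> ifs_g z ` Bs n)"
        show "x \<in> (\<Inter>n. ifs_f z ` Bs n) \<union> (\<Inter>n. ifs_g z ` Bs n)"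
        proof (cases "x \<in> (\<Inter>n. ifs_f z ` Bs n)")
          case False
          then obtain m where m: "x \<notin> ifs_f z ` Bs m" by blast
          have "x \<in> ifs_g z ` Bs n" for n
          proof -
            have "x \<notin> ifs_f z ` Bs (max m n)" using m decm[of m "max m n"] by auto
            then have "x \<in> ifs_g z ` Bs (max m n)" using x by blast
            then show ?thesis using decm[of n "max m n"] by auto
          qed
          then show ?thesis by blast
        qed blast
      qed
    qed blast
    also have "\<dots> = (\<Inter>n. Bs (Suc n))" by (simp add: Bs_def Tset_def)
    also have "\<dots> = K"
    proof
      show "(\<Inter>n. Bs (Suc n)) \<subseteq> K" unfolding K_def using dec
        by auto
    qed (auto simp: K_def)
    finally show ?thesis using f g by simp
  qed
  ultimately show ?thesis by blast
qed

lemma Lambda_props: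
  fixes z :: complex
  assumes z0: "z \<noteq> 0" and z1: "norm z < 1"
  shows "Lambda z \<noteq> {} \<and> compact (Lambda z) \<and> Lambda z = ifs_f z ` Lambda z \<union> ifs_g z ` Lambda z"
  unfolding Lambda_def
proof (rule theI')
  from attr_exists[OF assms] obtain K where K: "K \<noteq> {} \<and> compact K \<and> K = ifs_f z ` K \<union> ifs_g z ` K" by blast
  show "\<exists>!K. K \<noteq> {} \<and> compact K \<and> K = ifs_f z ` K \<union> ifs_g z ` K"
  proof (rule ex1I[where a=K])
    show "K \<noteq> {} \<and> compact K \<and> K = ifs_f z ` K \<union> ifs_g z ` K" by (rule K)
    fix K' assume "K' \<noteq> {} \<and> compact K' \<and> K' = ifs_f z ` K' \<union> ifs_g z ` K'"
    then show "K' = K" using K inv_sub[OF z1] by (metis subset_antisym)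
  qed
qed



lemma join3_bound:
  fixes A A' L B B' :: "real \<Rightarrow> complex"
  assumes "\<forall>s\<in>{0..1}. norm (A s - A' s) \<le> e" "\<forall>s\<in>{0..1}. norm (B s - B' s) \<le> e" "0 \<le> e" "t \<in> {0..1}"
  shows "norm ((A +++ (L +++ B)) t - (A' +++ (L +++ B')) t) \<le> e"
proof -
  consider "t \<le> 1/2" | "\<not> t \<le> 1/2" "2*t-1 \<le> 1/2" | "\<not> t \<le> 1/2" "\<not> 2*t-1 \<le> 1/2" by blast
  then show ?thesis
  proof cases
    case 1 then show ?thesis using assms by (simp add: joinpaths_def)
  next
    case 2 then show ?thesis using assms by (simp add: joinpaths_def)
  next
    case 3 then show ?thesis using assms by (simp add: joinpaths_def)
  qed
qed

lemma join3_P: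
  fixes A L B :: "real \<Rightarrow> complex"
  assumes "\<forall>s\<in>{0..1}. P (A s)" "\<forall>s\<in>{0..1}. P (L s)" "\<forall>s\<in>{0..1}. P (B s)" "t \<in> {0..1}"
  shows "P ((A +++ (L +++ B)) t)"
proof -
  consider "t \<le> 1/2" | "\<not> t \<le> 1/2" "2*t-1 \<le> 1/2" | "\<not> t \<le> 1/2" "\<not> 2*t-1 \<le> 1/2" by blast
  then show ?thesis
  proof cases
    case 1 then show ?thesis using assms by (simp add: joinpaths_def)
  next
    case 2 then show ?thesis using assms by (simp add: joinpaths_def)
  next
    case 3 then show ?thesis using assms by (simp add: joinpaths_def)
  qed
qed

locale ifsL =
  fixes z p q :: complex and K :: "complex set"
  assumes z0: "z \<noteq> 0" and z1: "norm z < 1" and Kne: "K \<noteq> {}" and Kc: "compact K"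
    and Kinv: "K = ifs_f z ` K \<union> ifs_g z ` K"
    and pK: "p \<in> ifs_f z ` K" and qK: "q \<in> ifs_g z ` K"
begin

definition Fi :: "complex \<Rightarrow> complex" where "Fi x = x / z"
definition Gi :: "complex \<Rightarrow> complex" where "Gi x = (x - 1) / z + 1"

lemma F_Fi[simp]: "ifs_f z (Fi x) = x" using z0 by (simp add: ifs_f_def Fi_def)
lemma G_Gi[simp]: "ifs_g z (Gi x) = x" using z0 by (simp add: ifs_g_def Gi_def)
lemma Fi_F[simp]: "Fi (ifs_f z x) = x" using z0 by (simp add: ifs_f_def Fi_def)
lemma Gi_G[simp]: "Gi (ifs_g z x) = x" using z0 by (simp add: ifs_g_def Gi_def)

lemma FK: "x \<in> K \<Longrightarrow> ifs_f z x \<in> K" using Kinv by blast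
lemma GK: "x \<in> K \<Longrightarrow> ifs_g z x \<in> K" using Kinv by blast
lemma pK': "Fi p \<in> K" "p \<in> K" using pK FK by auto
lemma qK': "Gi q \<in> K" "q \<in> K" using qK GK by auto
lemma splitK: assumes a: "a \<in> K" and n: "Fi a \<notin> K" shows "Gi a \<in> K"
proof -
  have "a \<in> ifs_f z ` K \<union> ifs_g z ` K" using a Kinv by blast
  then show ?thesis
  proof
    assume "a \<in> ifs_f z ` K"
    then obtain y where "y \<in> K" "a = ifs_f z y" by blast
    then show ?thesis using n by simp
  next
    assume "a \<in> ifs_g z ` K"
    then obtain y where "y \<in> K" "a = ifs_g z y" by blast
    then show ?thesis by simp
  qed
qed

lemma Kclosed: "closed K" using Kc compact_imp_closed by blast

lemma F_diff: "ifs_f z x - ifs_f z y = z * (x - y)" by (simp add: ifs_f_def algebra_simps)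
lemma G_diff: "ifs_g z x - ifs_g z y = z * (x - y)" by (simp add: ifs_g_def algebra_simps)

lemma infF: "infdist (ifs_f z x) K \<le> norm z * infdist x K"
proof -
  obtain w where w: "w \<in> K" "infdist x K = dist x w" using infdist_attains_inf[OF Kclosed Kne] by blast
  have "infdist (ifs_f z x) K \<le> dist (ifs_f z x) (ifs_f z w)" by (rule infdist_le[OF FK[OF w(1)]])
  also have "\<dots> = norm z * dist x w" by (simp add: dist_norm F_diff norm_mult)
  finally show ?thesis using w by simp
qed

lemma infG: "infdist (ifs_g z x) K \<le> norm z * infdist x K"
proof -
  obtain w where w: "w \<in> K" "infdist x K = dist x w" using infdist_attains_inf[OF Kclosed Kne] by blast
  have "infdist (ifs_g z x) K \<le> dist (ifs_g z x) (ifs_g z w)" by (rule infdist_le[OF GK[OF w(1)]])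
  also have "\<dots> = norm z * dist x w" by (simp add: dist_norm G_diff norm_mult)
  finally show ?thesis using w by simp
qed

lemma inf_line: assumes "s \<in> {0..1}" "u \<in> K" "v \<in> K"
  shows "infdist (linepath u v s) K \<le> norm (u - v) / 2"
proof (cases "s \<le> 1/2")
  case True
  have "infdist (linepath u v s) K \<le> dist (linepath u v s) u" by (rule infdist_le[OF assms(2)])
  also have "\<dots> = s * norm (u - v)"
    using assms(1) by (simp add: linepath_def dist_norm algebra_simps norm_minus_commute flip: scaleR_diff_right)
  also have "\<dots> \<le> (1/2) * norm (u - v)" using True by (intro mult_right_mono) auto
  finally show ?thesis by simp
next
  case False
  have "infdist (linepath u v s) K \<le> dist (linepath u v s) v" by (rule infdist_le[OF assms(3)])
  also have "\<dots> = (1 - s) * norm (u - v)"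
  proof -
    have "linepath u v s - v = (1 - s) *\<^sub>R (u - v)" by (simp add: linepath_def algebra_simps)
    then show ?thesis using assms(1) by (simp add: dist_norm)
  qed
  also have "\<dots> \<le> (1/2) * norm (u - v)" using False by (intro mult_right_mono) auto
  finally show ?thesis by simp
qed

definition T :: "(complex \<Rightarrow> complex \<Rightarrow> real \<Rightarrow> complex) \<Rightarrow> complex \<Rightarrow> complex \<Rightarrow> real \<Rightarrow> complex" where
  "T \<Gamma> a b = (if Fi a \<in> K \<and> Fi b \<in> K then ifs_f z \<circ> \<Gamma> (Fi a) (Fi b)
     else if Fi a \<notin> K \<and> Fi b \<notin> K then ifs_g z \<circ> \<Gamma> (Gi a) (Gi b)
     else if Fi a \<in> K then (ifs_f z \<circ> \<Gamma> (Fi a) (Fi p)) +++ (linepath p q +++ (ifs_g z \<circ> \<Gamma> (Gi q) (Gi b)))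
     else (ifs_g z \<circ> \<Gamma> (Gi a) (Gi q)) +++ (linepath q p +++ (ifs_f z \<circ> \<Gamma> (Fi p) (Fi b))))"

lemma path_F: "path g \<Longrightarrow> path (ifs_f z \<circ> g)"
  unfolding path_def ifs_f_def comp_def by (intro continuous_intros)
lemma path_G: "path g \<Longrightarrow> path (ifs_g z \<circ> g)"
  unfolding path_def ifs_g_def comp_def by (intro continuous_intros)

lemma T_path:
  assumes H: "\<forall>a\<in>K. \<forall>b\<in>K. path (\<Gamma> a b) \<and> pathstart (\<Gamma> a b) = a \<and> pathfinish (\<Gamma> a b) = b"
  shows "\<forall>a\<in>K. \<forall>b\<in>K. path (T \<Gamma> a b) \<and> pathstart (T \<Gamma> a b) = a \<and> pathfinish (T \<Gamma> a b) = b"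
proof (intro ballI)
  fix a b assume a: "a \<in> K" and b: "b \<in> K"
  have P: "path (ifs_f z \<circ> \<Gamma> x y)" "path (ifs_g z \<circ> \<Gamma> x y)"
    "pathstart (ifs_f z \<circ> \<Gamma> x y) = ifs_f z x" "pathfinish (ifs_f z \<circ> \<Gamma> x y) = ifs_f z y"
    "pathstart (ifs_g z \<circ> \<Gamma> x y) = ifs_g z x" "pathfinish (ifs_g z \<circ> \<Gamma> x y) = ifs_g z y"
    if "x \<in> K" "y \<in> K" for x y
    using H that path_F path_G by (auto simp: pathstart_def pathfinish_def)
  show "path (T \<Gamma> a b) \<and> pathstart (T \<Gamma> a b) = a \<and> pathfinish (T \<Gamma> a b) = b"
    using P[of "Fi a" "Fi b"] P[of "Gi a" "Gi b"] P[of "Fi a" "Fi p"] P[of "Gi q" "Gi b"]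
      P[of "Gi a" "Gi q"] P[of "Fi p" "Fi b"] splitK[OF a] splitK[OF b] pK' qK'
    unfolding T_def by (auto intro!: path_join_imp)
qed

lemma T_contr:
  assumes H: "\<forall>a\<in>K. \<forall>b\<in>K. \<forall>t\<in>{0..1}. norm (\<Gamma> a b t - \<Gamma>' a b t) \<le> e"
    and e: "0 \<le> e" and a: "a \<in> K" and b: "b \<in> K" and t: "t \<in> {0..1}"
  shows "norm (T \<Gamma> a b t - T \<Gamma>' a b t) \<le> norm z * e"
proof -
  have hF: "norm (ifs_f z (\<Gamma> x y s) - ifs_f z (\<Gamma>' x y s)) \<le> norm z * e"
    and hG: "norm (ifs_g z (\<Gamma> x y s) - ifs_g z (\<Gamma>' x y s)) \<le> norm z * e"
    if "x \<in> K" "y \<in> K" "0 \<le> s" "s \<le> 1" for x y s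
    using H that by (auto simp: F_diff G_diff norm_mult intro!: mult_left_mono)
  have hL: "0 \<le> norm z * e" using e by simp
  show ?thesis
  proof (cases "Fi a \<in> K \<and> Fi b \<in> K")
    case True
    then show ?thesis using hF[of "Fi a" "Fi b" t] t by (simp add: T_def)
  next
    case F1: False
    show ?thesis
    proof (cases "Fi a \<notin> K \<and> Fi b \<notin> K")
      case True
      then show ?thesis using F1 hG[of "Gi a" "Gi b" t] t splitK[OF a] splitK[OF b] by (simp add: T_def)
    next
      case F2: False
      show ?thesis
      proof (cases "Fi a \<in> K")
        case True
        then have Tx: "T \<Gamma>'' a b = (ifs_f z \<circ> \<Gamma>'' (Fi a) (Fi p)) +++ (linepath p q +++ (ifs_g z \<circ> \<Gamma>'' (Gi q) (Gi b)))"
          for \<Gamma>'' using F1 F2 by (simp add: T_def)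
        have "Gi b \<in> K" using True F1 splitK[OF b] by blast
        then show ?thesis unfolding Tx using True pK' qK' t
          by (intro join3_bound hL) (auto intro!: hF hG)
      next
        case False
        then have Tx: "T \<Gamma>'' a b = (ifs_g z \<circ> \<Gamma>'' (Gi a) (Gi q)) +++ (linepath q p +++ (ifs_f z \<circ> \<Gamma>'' (Fi p) (Fi b)))"
          for \<Gamma>'' using F1 F2 by (simp add: T_def)
        have "Gi a \<in> K" "Fi b \<in> K" using False F2 splitK[OF a] by blast+
        then show ?thesis unfolding Tx using pK' qK' t
          by (intro join3_bound hL) (auto intro!: hF hG)
      qed
    qed
  qed
qed

lemma T_img:
  assumes H: "\<forall>a\<in>K. \<forall>b\<in>K. \<forall>t\<in>{0..1}. infdist (\<Gamma> a b t) K \<le> r"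
    and r: "0 \<le> r" and a: "a \<in> K" and b: "b \<in> K" and t: "t \<in> {0..1}"
  shows "infdist (T \<Gamma> a b t) K \<le> max (norm z * r) (norm (p - q) / 2)"
proof -
  have hF: "infdist (ifs_f z (\<Gamma> x y s)) K \<le> max (norm z * r) (norm (p - q) / 2)"
    and hG: "infdist (ifs_g z (\<Gamma> x y s)) K \<le> max (norm z * r) (norm (p - q) / 2)"
    if "x \<in> K" "y \<in> K" "0 \<le> s" "s \<le> 1" for x y s
  proof -
    have "norm z * infdist (\<Gamma> x y s) K \<le> norm z * r" using H that by (auto intro!: mult_left_mono)
    then show "infdist (ifs_f z (\<Gamma> x y s)) K \<le> max (norm z * r) (norm (p - q) / 2)"
      "infdist (ifs_g z (\<Gamma> x y s)) K \<le> max (norm z * r) (norm (p - q) / 2)"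
      using infF[of "\<Gamma> x y s"] infG[of "\<Gamma> x y s"] by linarith+
  qed
  have hL: "infdist (linepath p q s) K \<le> max (norm z * r) (norm (p - q) / 2)"
    "infdist (linepath q p s) K \<le> max (norm z * r) (norm (p - q) / 2)"
    if "0 \<le> s" "s \<le> 1" for s
    using inf_line[of s p q] inf_line[of s q p] that pK' qK' by (auto simp: norm_minus_commute)
  show ?thesis
  proof (cases "Fi a \<in> K \<and> Fi b \<in> K")
    case True
    then show ?thesis using hF[of "Fi a" "Fi b" t] t by (simp add: T_def)
  next
    case F1: False
    show ?thesis
    proof (cases "Fi a \<notin> K \<and> Fi b \<notin> K")
      case True
      then show ?thesis using F1 hG[of "Gi a" "Gi b" t] t splitK[OF a] splitK[OF b] by (simp add: T_def)
    next
      case F2: False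
      show ?thesis
      proof (cases "Fi a \<in> K")
        case True
        then have Tx: "T \<Gamma> a b = (ifs_f z \<circ> \<Gamma> (Fi a) (Fi p)) +++ (linepath p q +++ (ifs_g z \<circ> \<Gamma> (Gi q) (Gi b)))"
          using F1 F2 by (simp add: T_def)
        have "Gi b \<in> K" using True F1 splitK[OF b] by blast
        then show ?thesis unfolding Tx using True pK' qK' t
          by (intro join3_P[where P="\<lambda>w. infdist w K \<le> max (norm z * r) (norm (p - q) / 2)"])
             (auto intro!: hF hG hL)
      next
        case False
        then have Tx: "T \<Gamma> a b = (ifs_g z \<circ> \<Gamma> (Gi a) (Gi q)) +++ (linepath q p +++ (ifs_f z \<circ> \<Gamma> (Fi p) (Fi b)))"
          using F1 F2 by (simp add: T_def)
        have "Gi a \<in> K" "Fi b \<in> K" using False F2 splitK[OF a] by blast+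
        then show ?thesis unfolding Tx using pK' qK' t
          by (intro join3_P[where P="\<lambda>w. infdist w K \<le> max (norm z * r) (norm (p - q) / 2)"])
             (auto intro!: hF hG hL)
      qed
    qed
  qed
qed


definition gam :: "nat \<Rightarrow> complex \<Rightarrow> complex \<Rightarrow> real \<Rightarrow> complex" where
  "gam n = (T ^^ n) (\<lambda>a b. linepath a b)"

lemma gam_Suc: "gam (Suc n) = T (gam n)" by (simp add: gam_def)
lemma gam_0: "gam 0 a b = linepath a b" by (simp add: gam_def)

lemma gam_path: "\<forall>a\<in>K. \<forall>b\<in>K. path (gam n a b) \<and> pathstart (gam n a b) = a \<and> pathfinish (gam n a b) = b"
proof (induction n)
  case 0 then show ?case by (simp add: gam_0)
next
  case (Suc n) then show ?case unfolding gam_Suc by (rule T_path)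
qed

definition R :: real where "R = (SOME R. 0 \<le> R \<and> (\<forall>x\<in>K. norm x \<le> R))"

lemma R: "0 \<le> R" "x \<in> K \<Longrightarrow> norm x \<le> R"
proof -
  have "bounded K" using Kc compact_imp_bounded by blast
  then obtain B where "\<forall>x\<in>K. norm x \<le> B" by (meson bounded_iff)
  then have "\<exists>R. 0 \<le> R \<and> (\<forall>x\<in>K. norm x \<le> R)" using Kne by (meson all_not_in_conv norm_ge_zero order_trans)
  then have "0 \<le> R \<and> (\<forall>x\<in>K. norm x \<le> R)" unfolding R_def by (rule someI_ex)
  then show "0 \<le> R" "x \<in> K \<Longrightarrow> norm x \<le> R" by auto
qed

abbreviation "\<delta> \<equiv> norm (p - q)"

lemma gam_inf: "\<forall>a\<in>K. \<forall>b\<in>K. \<forall>t\<in>{0..1}. infdist (gam n a b t) K \<le> \<delta>/2 + norm z ^ n * (2*R)"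
proof (induction n)
  case 0
  show ?case
  proof (intro ballI)
    fix a b t assume a: "a \<in> K" and b: "b \<in> K" and t: "t \<in> {0..(1::real)}"
    have "infdist (linepath a b t) K \<le> dist (linepath a b t) a" by (rule infdist_le[OF a])
    also have "\<dots> = t * norm (b - a)"
    proof -
      have "linepath a b t - a = t *\<^sub>R (b - a)" by (simp add: linepath_def algebra_simps)
      then show ?thesis using t by (simp add: dist_norm)
    qed
    also have "\<dots> \<le> 1 * norm (b - a)" using t by (intro mult_right_mono) auto
    also have "\<dots> \<le> 2 * R" using norm_triangle_ineq4[of b a] R(2)[OF a] R(2)[OF b] by simp
    finally have "infdist (gam 0 a b t) K \<le> 2*R" by (simp add: gam_0)
    then show "infdist (gam 0 a b t) K \<le> \<delta>/2 + norm z ^ 0 * (2*R)" using norm_ge_zero[of "p-q"] by (simp only: power_0 mult.left_neutral)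
  qed
next
  case (Suc n)
  show ?case
  proof (intro ballI)
    fix a b t assume a: "a \<in> K" and b: "b \<in> K" and t: "t \<in> {0..(1::real)}"
    have r0: "0 \<le> \<delta>/2 + norm z ^ n * (2*R)" using R(1) by simp
    have "infdist (gam (Suc n) a b t) K \<le> max (norm z * (\<delta>/2 + norm z ^ n * (2*R))) (\<delta>/2)"
      unfolding gam_Suc by (rule T_img[OF Suc r0 a b t])
    also have "\<dots> \<le> \<delta>/2 + norm z ^ Suc n * (2*R)"
    proof -
      have "norm z * (\<delta>/2) \<le> 1 * (\<delta>/2)" using z1 by (intro mult_right_mono) auto
      moreover have "0 \<le> norm z ^ Suc n * (2*R)" using R(1) by simp
      ultimately show ?thesis by (simp add: algebra_simps)
    qed
    finally show "infdist (gam (Suc n) a b t) K \<le> \<delta>/2 + norm z ^ Suc n * (2*R)" .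
  qed
qed

lemma norm_from_inf: "infdist w K \<le> r \<Longrightarrow> norm w \<le> R + r"
proof -
  assume h: "infdist w K \<le> r"
  obtain y where y: "y \<in> K" "infdist w K = dist w y" using infdist_attains_inf[OF Kclosed Kne] by blast
  have "norm w \<le> norm y + dist w y" using norm_triangle_ineq2[of w y] by (simp add: dist_norm)
  then show ?thesis using y R(2)[OF y(1)] h by simp
qed

definition M :: real where "M = 6 * R + \<delta>"

lemma gam_diff: "\<forall>a\<in>K. \<forall>b\<in>K. \<forall>t\<in>{0..1}. norm (gam (Suc n) a b t - gam n a b t) \<le> norm z ^ n * M"
proof (induction n)
  case 0
  show ?case
  proof (intro ballI)
    fix a b t assume a: "a \<in> K" and b: "b \<in> K" and t: "t \<in> {0..(1::real)}"
    have n1: "norm (gam 1 a b t) \<le> R + (\<delta>/2 + norm z * (2*R))"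
      using gam_inf[of 1] a b t norm_from_inf by simp
    have "infdist (gam 0 a b t) K \<le> \<delta>/2 + 2*R" using gam_inf[of 0] a b t by simp
    then have n0: "norm (gam 0 a b t) \<le> R + (\<delta>/2 + 2*R)" by (rule norm_from_inf)
    have "norm z * (2*R) \<le> 1 * (2*R)" using z1 R(1) by (intro mult_right_mono) auto
    then show "norm (gam (Suc 0) a b t - gam 0 a b t) \<le> norm z ^ 0 * M"
      using norm_triangle_ineq4[of "gam 1 a b t" "gam 0 a b t"] n1 n0 by (simp add: M_def)
  qed
next
  case (Suc n)
  show ?case
  proof (intro ballI)
    fix a b t assume a: "a \<in> K" and b: "b \<in> K" and t: "t \<in> {0..(1::real)}"
    have e: "0 \<le> norm z ^ n * M" using R(1) by (simp add: M_def)
    show "norm (gam (Suc (Suc n)) a b t - gam (Suc n) a b t) \<le> norm z ^ Suc n * M"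
      using T_contr[OF Suc e a b t] unfolding gam_Suc by (simp add: mult.assoc)
  qed
qed

lemma path_in_nbhd:
  assumes a: "a \<in> K" and b: "b \<in> K"
  shows "\<exists>g. path g \<and> pathstart g = a \<and> pathfinish g = b \<and> (\<forall>t\<in>{0..1}. infdist (g t) K \<le> \<delta>/2)"
proof -
  define h where "h k t = gam (Suc k) a b t - gam k a b t" for k t
  have ul: "uniform_limit {0..1} (\<lambda>n t. \<Sum>i<n. h i t) (\<lambda>t. suminf (\<lambda>i. h i t)) sequentially"
  proof (rule Weierstrass_m_test)
    show "norm (h n t) \<le> norm z ^ n * M" if "t \<in> {0..1}" for n t
      using gam_diff[of n] a b that by (simp add: h_def)
    show "summable (\<lambda>n. norm z ^ n * M)" using z1 by (intro summable_mult2 summable_geometric) simp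
  qed
  have tel: "(\<Sum>i<n. h i t) = gam n a b t - linepath a b t" for n t
    unfolding h_def using sum_lessThan_telescope[of "\<lambda>k. gam k a b t" n] by (simp add: gam_0)
  define g where "g t = linepath a b t + suminf (\<lambda>i. h i t)" for t
  have pg: "path (gam n a b)" for n using gam_path[of n] a b by blast
  have cont: "continuous_on {0..1} (\<lambda>t. suminf (\<lambda>i. h i t))"
  proof (rule uniform_limit_theorem[OF _ ul])
    show "\<forall>\<^sub>F n in sequentially. continuous_on {0..1} (\<lambda>t. \<Sum>i<n. h i t)"
      unfolding tel using pg[unfolded path_def] by (intro always_eventually allI continuous_intros) auto
  qed simp
  have pathg: "path g" unfolding path_def g_def by (intro continuous_intros cont)
  have lim: "(\<lambda>n. gam n a b t) \<longlonglongrightarrow> g t" if "t \<in> {0..1}" for t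
  proof -
    have "(\<lambda>n. linepath a b t + (\<Sum>i<n. h i t)) \<longlonglongrightarrow> g t"
      unfolding g_def by (intro tendsto_add tendsto_const tendsto_uniform_limitI[OF ul that])
    then show ?thesis by (simp add: tel)
  qed
  have st: "g 0 = a"
  proof -
    have "(\<lambda>n. gam n a b 0) \<longlonglongrightarrow> g 0" using lim by simp
    moreover have "gam n a b 0 = a" for n using gam_path[of n] a b by (simp add: pathstart_def)
    ultimately have "(\<lambda>n. a) \<longlonglongrightarrow> g 0" by simp
    then show ?thesis by (simp add: LIMSEQ_const_iff)
  qed
  have fi: "g 1 = b"
  proof -
    have "(\<lambda>n. gam n a b 1) \<longlonglongrightarrow> g 1" using lim by simp
    moreover have "gam n a b 1 = b" for n using gam_path[of n] a b by (simp add: pathfinish_def)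
    ultimately have "(\<lambda>n. b) \<longlonglongrightarrow> g 1" by simp
    then show ?thesis by (simp add: LIMSEQ_const_iff)
  qed
  have inf: "infdist (g t) K \<le> \<delta>/2" if t: "t \<in> {0..1}" for t
  proof (rule tendsto_le[OF sequentially_bot])
    show "(\<lambda>n. infdist (gam n a b t) K) \<longlonglongrightarrow> infdist (g t) K" by (intro tendsto_infdist lim t)
    show "(\<lambda>n. \<delta>/2 + norm z ^ n * (2*R)) \<longlonglongrightarrow> \<delta>/2"
      using z1 by (auto intro!: tendsto_eq_intros LIMSEQ_power_zero)
    show "\<forall>\<^sub>F n in sequentially. infdist (gam n a b t) K \<le> \<delta>/2 + norm z ^ n * (2*R)"
      using gam_inf a b t by (intro always_eventually allI) blast
  qed
  show ?thesis using pathg st fi inf by (auto simp: pathstart_def pathfinish_def)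
qed

lemma nbhd_path_connected: "path_connected {x. infdist x K \<le> \<delta>/2}"
proof -
  let ?N = "{x. infdist x K \<le> \<delta>/2}"
  have to_K: "\<exists>a\<in>K. path_component ?N x a" if x: "x \<in> ?N" for x
  proof -
    obtain a where a: "a \<in> K" "infdist x K = dist x a" using infdist_attains_inf[OF Kclosed Kne] by blast
    have "closed_segment x a \<subseteq> ?N"
    proof
      fix w assume w: "w \<in> closed_segment x a"
      have "dist w a \<le> dist x a" using segment_bound(2)[OF w] by (simp add: dist_norm norm_minus_commute)
      then show "w \<in> ?N" using x a infdist_le2[of a K w "\<delta>/2"] by auto
    qed
    then show ?thesis using a path_component_linepath by blast
  qed
  have KK: "path_component ?N a b" if ab: "a \<in> K" "b \<in> K" for a b
  proof -
    obtain g where "path g" "pathstart g = a" "pathfinish g = b" "\<forall>t\<in>{0..1}. infdist (g t) K \<le> \<delta>/2"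
      using path_in_nbhd[OF ab] by blast
    then show ?thesis unfolding path_component_def path_image_def by auto
  qed
  show ?thesis unfolding path_connected_component
  proof (intro ballI)
    fix x y assume x: "x \<in> ?N" and y: "y \<in> ?N"
    obtain a where a: "a \<in> K" "path_component ?N x a" using to_K[OF x] by blast
    obtain b where b: "b \<in> K" "path_component ?N y b" using to_K[OF y] by blast
    show "path_component ?N x y"
      using path_component_trans[OF a(2) path_component_trans[OF KK[OF a(1) b(1)] path_component_sym[OF b(2)]]] .
  qed
qed

end

theorem lemma5p2p2:
  fixes z p q :: complex and \<delta> :: real
  assumes "0 < norm z" and "norm z < 1"
    and "p \<in> ifs_f z ` Lambda z" and "q \<in> ifs_g z ` Lambda z"
    and "norm (p - q) = \<delta>"
  shows "path_connected {x :: complex. infdist x (Lambda z) \<le> \<delta> / 2}"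
proof -
  have z0: "z \<noteq> 0" using assms(1) by auto
  note L = Lambda_props[OF z0 assms(2)]
  interpret ifsL z p q "Lambda z"
  proof
    show "z \<noteq> 0" by (rule z0)
    show "norm z < 1" by (rule assms(2))
    show "Lambda z \<noteq> {}" using L by blast
    show "compact (Lambda z)" using L by blast
    show "Lambda z = ifs_f z ` Lambda z \<union> ifs_g z ` Lambda z" using L by blast
    show "p \<in> ifs_f z ` Lambda z" by (rule assms(3))
    show "q \<in> ifs_g z ` Lambda z" by (rule assms(4))
  qed
  show ?thesis using nbhd_path_connected assms(5) by simp
qed

end
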